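(* Let $k\ge 2$ and let $p_1,\dots,p_k\ge 2$ be integers. If $W=C_{p_k}\wr C_{p_{k-1}}\wr\cdots\wr C_{p_1}$, then $cw(W)=1$.
   Context: $C_p$ denotes the cyclic group of order $p$ acting on $\{1,\dots,p\}$ by the shift $(1,2,\dots,p)$; $\wr$ denotes the permutational wreath product ($H\wr G=H^X\rtimes G$ for $G$ acting on $X$), which is associative. The commutator width $cw(G)$ is the maximum, over elements $g$ of the derived subgroup $G'$, of the least number of commutators whose product is $g$. *)

theory Defs
  imports "HOL-Algebra.Algebra" "HOL-Library.Extended_Nat"
begin

definition comm_length :: "('a, 'b) monoid_scheme \<Rightarrow> 'a \<Rightarrow> nat" where
  "comm_length G g = (LEAST n. \<exists>cs. length cs = n \<and> set cs \<subseteq> derived_set G (carrier G)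
                                   \<and> g = foldr (\<otimes>\<^bsub>G\<^esub>) cs \<one>\<^bsub>G\<^esub>)"

definition commutator_width :: "('a, 'b) monoid_scheme \<Rightarrow> enat" where
  "commutator_width G = (SUP g \<in> derived G (carrier G). enat (comm_length G g))"

definition cyc_perms :: "nat \<Rightarrow> (nat \<Rightarrow> nat) set" where
  "cyc_perms p = {(\<lambda>y\<in>{0..<p}. (y + i) mod p) | i. i < p}"

(* Points of the imprimitive action of H wr G: pairs (x,y), x in Xs, y in Y, encoded as x @ [y] *)
definition wr_points :: "nat set \<Rightarrow> nat list set \<Rightarrow> nat list set" where
  "wr_points Y Xs = {append x [y] | x y. x \<in> Xs \<and> y \<in> Y}"

(* Permutational wreath product H wr G = H^Xs \<rtimes> G (G acting on Xs, H acting on Y),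
   realised by its faithful imprimitive action on Xs \<times> Y: (x,y) \<mapsto> (g x, f(x) y). *)
definition wr_perm :: "(nat \<Rightarrow> nat) set \<Rightarrow> nat set \<Rightarrow> (nat list \<Rightarrow> nat list) set
                         \<Rightarrow> nat list set \<Rightarrow> (nat list \<Rightarrow> nat list) set" where
  "wr_perm H Y G Xs =
     {(\<lambda>z\<in>wr_points Y Xs. g (butlast z) @ [f (butlast z) (last z)]) | g f. g \<in> G \<and> f \<in> Xs \<rightarrow> H}"

(* wr_aux [q_1,...,q_m] = C_{q_1} wr (C_{q_2} wr ( ... wr (C_{q_m} wr 1))) with its point set *)
fun wr_aux :: "nat list \<Rightarrow> (nat list \<Rightarrow> nat list) set \<times> nat list set" where
  "wr_aux [] = ({(\<lambda>z\<in>{[]}. z)}, {[]})"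
| "wr_aux (p # qs) = (case wr_aux qs of (G, Xs) \<Rightarrow>
       (wr_perm (cyc_perms p) {0..<p} G Xs, wr_points {0..<p} Xs))"

(* iter_wreath [p_1,...,p_k] = C_{p_k} wr C_{p_{k-1}} wr ... wr C_{p_1}, as a permutation group *)
definition iter_wreath :: "nat list \<Rightarrow> (nat list \<Rightarrow> nat list) monoid" where
  "iter_wreath ps = (BijGroup (snd (wr_aux (rev ps)))) \<lparr>carrier := fst (wr_aux (rev ps))\<rparr>"

end

theory Submission
  imports Defs
begin


definition wmk :: "nat \<Rightarrow> nat list set \<Rightarrow> (nat list \<Rightarrow> nat list) \<Rightarrow> (nat list \<Rightarrow> int) \<Rightarrow> (nat list \<Rightarrow> nat list)" where
"wmk n Xs g i = (\<lambda>z\<in>wr_points {0..<n} Xs. g (butlast z) @ [nat ((int (last z) + i (butlast z)) mod int n)])"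

lemma wr_points_iff: "z \<in> wr_points Y Xs \<longleftrightarrow> z \<noteq> [] \<and> butlast z \<in> Xs \<and> last z \<in> Y"
proof
  assume "z \<in> wr_points Y Xs" then show "z \<noteq> [] \<and> butlast z \<in> Xs \<and> last z \<in> Y"
    unfolding wr_points_def by auto
next
  assume a: "z \<noteq> [] \<and> butlast z \<in> Xs \<and> last z \<in> Y"
  then have "z = butlast z @ [last z]" by simp
  then show "z \<in> wr_points Y Xs" using a unfolding wr_points_def by blast
qed
lemma wr_points_app[simp]: "x @ [y] \<in> wr_points Y Xs \<longleftrightarrow> x \<in> Xs \<and> y \<in> Y"
  by (simp add: wr_points_iff)

lemma wmk_app: "x \<in> Xs \<Longrightarrow> y < n \<Longrightarrow> wmk n Xs g i (x @ [y]) = g x @ [nat ((int y + i x) mod int n)]"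
  by (simp add: wmk_def)

lemma wmk_out: "z \<notin> wr_points {0..<n} Xs \<Longrightarrow> wmk n Xs g i z = undefined"
  by (simp add: wmk_def)

lemma wmk_ext: assumes "\<And>x y. x \<in> Xs \<Longrightarrow> y < n \<Longrightarrow> f (x @ [y]) = wmk n Xs g i (x @ [y])"
  and "f \<in> extensional (wr_points {0..<n} Xs)"
  shows "f = wmk n Xs g i"
proof
  fix z show "f z = wmk n Xs g i z"
  proof (cases "z \<in> wr_points {0..<n} Xs")
    case True
    then obtain x y where "z = x @ [y]" "x \<in> Xs" "y < n" unfolding wr_points_def by auto
    then show ?thesis using assms(1) by simp
  next
    case False then show ?thesis using assms(2) by (simp add: wmk_def extensional_def)
  qed
qed

lemma wmk_cong: assumes "\<And>x. x \<in> Xs \<Longrightarrow> g x = g' x" "\<And>x. x \<in> Xs \<Longrightarrow> i x mod int n = i' x mod int n"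
  shows "wmk n Xs g i = wmk n Xs g' i'"
  unfolding wmk_def
proof (rule restrict_ext)
  fix z assume "z \<in> wr_points {0..<n} Xs"
  then have b: "butlast z \<in> Xs" by (simp add: wr_points_iff)
  have "(int (last z) + i (butlast z)) mod int n = (int (last z) + i' (butlast z)) mod int n"
    by (metis mod_add_right_eq assms(2) b)
  then show "g (butlast z) @ [nat ((int (last z) + i (butlast z)) mod int n)] =
        g' (butlast z) @ [nat ((int (last z) + i' (butlast z)) mod int n)]"
    using assms(1) b by simp
qed

lemma nat_mod_helper: "n > 0 \<Longrightarrow> (y + nat (a mod int n)) mod n = nat ((int y + a) mod int n)"
proof -
  assume "n > 0"
  have "int ((y + nat (a mod int n)) mod n) = (int y + a mod int n) mod int n"
    using \<open>n > 0\<close> by (simp add: zmod_int)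
  also have "\<dots> = (int y + a) mod int n" by (simp add: mod_add_right_eq)
  finally show ?thesis by (metis nat_int)
qed

lemma nat_mod_lt: "n > 0 \<Longrightarrow> nat (a mod int n) < n"
  by (simp add: nat_less_iff)


lemma nat_add_mod_int: "(a + b) mod n = nat ((int a + int b) mod int n)"
  by (metis nat_int of_nat_add zmod_int)

lemma wr_perm_eq: assumes "n \<ge> 1"
  shows "wr_perm (cyc_perms n) {0..<n} G Xs = {wmk n Xs g i | g i. g \<in> G}"
proof
  show "wr_perm (cyc_perms n) {0..<n} G Xs \<subseteq> {wmk n Xs g i | g i. g \<in> G}"
  proof
    fix s assume "s \<in> wr_perm (cyc_perms n) {0..<n} G Xs"
    then obtain g f where s: "s = (\<lambda>z\<in>wr_points {0..<n} Xs. g (butlast z) @ [f (butlast z) (last z)])"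
      and g: "g \<in> G" and f: "f \<in> Xs \<rightarrow> cyc_perms n" unfolding wr_perm_def by blast
    have "\<forall>x\<in>Xs. \<exists>k. k < n \<and> f x = (\<lambda>y\<in>{0..<n}. (y + k) mod n)"
      using f unfolding cyc_perms_def by blast
    then obtain K where K: "\<And>x. x \<in> Xs \<Longrightarrow> K x < n \<and> f x = (\<lambda>y\<in>{0..<n}. (y + K x) mod n)"
      by metis
    have "s = wmk n Xs g (\<lambda>x. int (K x))"
      unfolding s wmk_def
    proof (rule restrict_ext)
      fix z assume z: "z \<in> wr_points {0..<n} Xs"
      then have "butlast z \<in> Xs" "last z < n" by (auto simp: wr_points_iff)
      then show "g (butlast z) @ [f (butlast z) (last z)] =
         g (butlast z) @ [nat ((int (last z) + int (K (butlast z))) mod int n)]"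
        using K[of "butlast z"] by (simp add: nat_add_mod_int)
    qed
    then show "s \<in> {wmk n Xs g i | g i. g \<in> G}" using g by blast
  qed
next
  show "{wmk n Xs g i | g i. g \<in> G} \<subseteq> wr_perm (cyc_perms n) {0..<n} G Xs"
  proof
    fix s assume "s \<in> {wmk n Xs g i | g i. g \<in> G}"
    then obtain g i where s: "s = wmk n Xs g i" and g: "g \<in> G" by blast
    define f where "f = (\<lambda>x. \<lambda>y\<in>{0..<n}. (y + nat (i x mod int n)) mod n)"
    have f: "f \<in> Xs \<rightarrow> cyc_perms n"
      proof
      fix x assume "x \<in> Xs"
      have "nat (i x mod int n) < n" using assms nat_mod_lt by simp
      then show "f x \<in> cyc_perms n" unfolding f_def cyc_perms_def by blast
    qed
    have "s = (\<lambda>z\<in>wr_points {0..<n} Xs. g (butlast z) @ [f (butlast z) (last z)])"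
      unfolding s wmk_def
    proof (rule restrict_ext)
      fix z assume z: "z \<in> wr_points {0..<n} Xs"
      then have "last z < n" by (auto simp: wr_points_iff)
      then show "g (butlast z) @ [nat ((int (last z) + i (butlast z)) mod int n)] =
          g (butlast z) @ [f (butlast z) (last z)]"
        using assms by (simp add: f_def nat_mod_helper)
    qed
    then show "s \<in> wr_perm (cyc_perms n) {0..<n} G Xs" unfolding wr_perm_def
      using f g by (intro CollectI exI[of _ g] exI[of _ f] conjI) simp_all
  qed
qed




lemma int_nat_mod: "n > 0 \<Longrightarrow> int (nat (a mod int n)) = a mod int n"
  by simp

lemma wmk_in_WP: assumes "a \<in> wr_points {0..<n} Xs" "\<And>x. x \<in> Xs \<Longrightarrow> g x \<in> Xs" "n > 0"
  shows "wmk n Xs g i a \<in> wr_points {0..<n} Xs"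
proof -
  obtain x y where "a = x @ [y]" "x \<in> Xs" "y < n" using assms(1) unfolding wr_points_def by auto
  then show ?thesis using assms by (simp add: wmk_app nat_mod_lt)
qed

lemma wmk_comp: assumes "n > 0" "\<And>x. x \<in> Xs \<Longrightarrow> h x \<in> Xs"
  shows "compose (wr_points {0..<n} Xs) (wmk n Xs g i) (wmk n Xs h j) = wmk n Xs (\<lambda>x. g (h x)) (\<lambda>x. j x + i (h x))"
proof (rule wmk_ext)
  fix x y assume xy: "x \<in> Xs" "y < n"
  have hx: "h x \<in> Xs" using assms xy by simp
  have e: "(int (nat ((int y + j x) mod int n)) + i (h x)) mod int n = (int y + (j x + i (h x))) mod int n"
    using assms(1) by (simp add: mod_add_left_eq add.assoc)
  have "compose (wr_points {0..<n} Xs) (wmk n Xs g i) (wmk n Xs h j) (x @ [y])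
      = wmk n Xs g i (h x @ [nat ((int y + j x) mod int n)])"
    using xy by (simp add: compose_eq wmk_app)
  also have "\<dots> = g (h x) @ [nat ((int (nat ((int y + j x) mod int n)) + i (h x)) mod int n)]"
    using hx assms(1) by (simp add: wmk_app nat_mod_lt)
  also have "\<dots> = g (h x) @ [nat ((int y + (j x + i (h x))) mod int n)]"
    by (simp only: e)
  also have "\<dots> = wmk n Xs (\<lambda>x. g (h x)) (\<lambda>x. j x + i (h x)) (x @ [y])"
    using xy by (simp add: wmk_app)
  finally show "compose (wr_points {0..<n} Xs) (wmk n Xs g i) (wmk n Xs h j) (x @ [y]) =
       wmk n Xs (\<lambda>x. g (h x)) (\<lambda>x. j x + i (h x)) (x @ [y])" .
qed simp

lemma wmk_id: assumes "n > 0"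
  shows "wmk n Xs (\<lambda>x. x) (\<lambda>x. 0) = (\<lambda>z\<in>wr_points {0..<n} Xs. z)"
proof (rule sym, rule wmk_ext)
  fix x y assume xy: "x \<in> Xs" "y < n"
  then show "(\<lambda>z\<in>wr_points {0..<n} Xs. z) (x @ [y]) = wmk n Xs (\<lambda>x. x) (\<lambda>x. 0) (x @ [y])"
    by (simp add: wmk_app)
qed simp

lemma wmk_bij: assumes "n > 0" "g \<in> Bij Xs"
  shows "wmk n Xs g i \<in> Bij (wr_points {0..<n} Xs)"
proof -
  let ?W = "wr_points {0..<n} Xs"
  let ?g' = "inv_into Xs g"
  have bg: "bij_betw g Xs Xs" using assms(2) by (simp add: Bij_def)
  have gX: "\<And>x. x \<in> Xs \<Longrightarrow> g x \<in> Xs" using bg bij_betwE by blast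
  have g'X: "\<And>x. x \<in> Xs \<Longrightarrow> ?g' x \<in> Xs" using bg by (metis bij_betw_def inv_into_into)
  have l: "\<And>x. x \<in> Xs \<Longrightarrow> ?g' (g x) = x" using bg by (simp add: bij_betw_inv_into_left)
  have r: "\<And>x. x \<in> Xs \<Longrightarrow> g (?g' x) = x" using bg by (simp add: bij_betw_inv_into_right)
  let ?f = "wmk n Xs g i" and ?f' = "wmk n Xs ?g' (\<lambda>x. - i (?g' x))"
  have c1: "compose ?W ?f' ?f = (\<lambda>z\<in>?W. z)"
  proof -
    have "compose ?W ?f' ?f = wmk n Xs (\<lambda>x. ?g' (g x)) (\<lambda>x. i x + - i (?g' (g x)))"
      by (rule wmk_comp[OF assms(1)], rule gX)
    also have "\<dots> = wmk n Xs (\<lambda>x. x) (\<lambda>x. 0)"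
      by (rule wmk_cong) (simp_all add: l)
    finally show ?thesis using wmk_id[OF assms(1)] by simp
  qed
  have c2: "compose ?W ?f ?f' = (\<lambda>z\<in>?W. z)"
  proof -
    have "compose ?W ?f ?f' = wmk n Xs (\<lambda>x. g (?g' x)) (\<lambda>x. - i (?g' x) + i (?g' x))"
      by (rule wmk_comp[OF assms(1)], rule g'X)
    also have "\<dots> = wmk n Xs (\<lambda>x. x) (\<lambda>x. 0)"
      by (rule wmk_cong) (simp_all add: r)
    finally show ?thesis using wmk_id[OF assms(1)] by simp
  qed
  have "bij_betw ?f ?W ?W"
  proof (rule bij_betw_byWitness[where f'="?f'"])
    show "\<forall>a\<in>?W. ?f' (?f a) = a"
    proof
      fix a assume a: "a \<in> ?W"
      have "compose ?W ?f' ?f a = a" using c1 a by simp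
      then show "?f' (?f a) = a" using a by (simp add: compose_eq)
    qed
    show "\<forall>a\<in>?W. ?f (?f' a) = a"
    proof
      fix a assume a: "a \<in> ?W"
      have "compose ?W ?f ?f' a = a" using c2 a by simp
      then show "?f (?f' a) = a" using a by (simp add: compose_eq)
    qed
    show "?f ` ?W \<subseteq> ?W" using wmk_in_WP[of _ n Xs g i] gX assms(1) by blast
    show "?f' ` ?W \<subseteq> ?W" using wmk_in_WP[of _ n Xs ?g'] g'X assms(1) by blast
  qed
  then show ?thesis unfolding Bij_def by (simp add: wmk_def)
qed




lemma BijGroup_mult: "g \<in> Bij S \<Longrightarrow> h \<in> Bij S \<Longrightarrow> g \<otimes>\<^bsub>BijGroup S\<^esub> h = compose S g h"
  by (simp add: BijGroup_def)

lemma BijGroup_one: "\<one>\<^bsub>BijGroup S\<^esub> = (\<lambda>x\<in>S. x)"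
  by (simp add: BijGroup_def)

lemma BijGroup_carrier: "carrier (BijGroup S) = Bij S"
  by (simp add: BijGroup_def)

lemma Bij_mem: "g \<in> Bij S \<Longrightarrow> x \<in> S \<Longrightarrow> g x \<in> S"
  using Bij_imp_funcset by blast

lemma Bij_inv_mem: "g \<in> Bij S \<Longrightarrow> inv\<^bsub>BijGroup S\<^esub> g \<in> Bij S"
  using group.inv_closed[OF group_BijGroup] by (simp add: BijGroup_carrier)

lemma Bij_inv_left: assumes "g \<in> Bij S" "x \<in> S" shows "(inv\<^bsub>BijGroup S\<^esub> g) (g x) = x"
proof -
  have "g x \<in> S" using Bij_mem assms .
  then show ?thesis using assms bij_betw_inv_into_left[of g S S x] by (simp add: inv_BijGroup Bij_def)
qed

lemma Bij_inv_right: "g \<in> Bij S \<Longrightarrow> x \<in> S \<Longrightarrow> g ((inv\<^bsub>BijGroup S\<^esub> g) x) = x"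
  using bij_betw_inv_into_right[of g S S x] by (simp add: inv_BijGroup Bij_def)

lemma wmk_memI: "g \<in> G \<Longrightarrow> wmk n Xs g i \<in> {wmk n Xs g i | g i. g \<in> G}"
  by blast

lemma wmk_mult: assumes "n > 0" "g \<in> Bij Xs" "h \<in> Bij Xs"
  shows "wmk n Xs g i \<otimes>\<^bsub>BijGroup (wr_points {0..<n} Xs)\<^esub> wmk n Xs h j
       = wmk n Xs (g \<otimes>\<^bsub>BijGroup Xs\<^esub> h) (\<lambda>x. j x + i (h x))"
proof -
  have b1: "wmk n Xs g i \<in> Bij (wr_points {0..<n} Xs)" by (rule wmk_bij[OF assms(1,2)])
  have b2: "wmk n Xs h j \<in> Bij (wr_points {0..<n} Xs)" by (rule wmk_bij[OF assms(1,3)])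
  have "wmk n Xs g i \<otimes>\<^bsub>BijGroup (wr_points {0..<n} Xs)\<^esub> wmk n Xs h j
      = compose (wr_points {0..<n} Xs) (wmk n Xs g i) (wmk n Xs h j)"
    by (rule BijGroup_mult[OF b1 b2])
  also have "\<dots> = wmk n Xs (\<lambda>x. g (h x)) (\<lambda>x. j x + i (h x))"
    by (rule wmk_comp[OF assms(1)], rule Bij_mem[OF assms(3)])
  also have "\<dots> = wmk n Xs (g \<otimes>\<^bsub>BijGroup Xs\<^esub> h) (\<lambda>x. j x + i (h x))"
  proof (rule wmk_cong)
    fix x assume x: "x \<in> Xs"
    show "g (h x) = (g \<otimes>\<^bsub>BijGroup Xs\<^esub> h) x"
      unfolding BijGroup_mult[OF assms(2,3)] using x by (simp add: compose_eq)
  qed simp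
  finally show ?thesis .
qed

lemma wmk_one: assumes "n > 0"
  shows "\<one>\<^bsub>BijGroup (wr_points {0..<n} Xs)\<^esub> = wmk n Xs (\<one>\<^bsub>BijGroup Xs\<^esub>) (\<lambda>x. 0)"
proof -
  have "wmk n Xs (\<one>\<^bsub>BijGroup Xs\<^esub>) (\<lambda>x. 0) = wmk n Xs (\<lambda>x. x) (\<lambda>x. 0)"
  proof (rule wmk_cong)
    fix x assume "x \<in> Xs" then show "\<one>\<^bsub>BijGroup Xs\<^esub> x = x" unfolding BijGroup_one by simp
  qed simp
  also have "\<dots> = \<one>\<^bsub>BijGroup (wr_points {0..<n} Xs)\<^esub>"
    unfolding BijGroup_one by (rule wmk_id[OF assms])
  finally show ?thesis by (rule sym)
qed

lemma wmk_inv: assumes "n > 0" "g \<in> Bij Xs"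
  shows "inv\<^bsub>BijGroup (wr_points {0..<n} Xs)\<^esub> (wmk n Xs g i)
       = wmk n Xs (inv\<^bsub>BijGroup Xs\<^esub> g) (\<lambda>x. - i ((inv\<^bsub>BijGroup Xs\<^esub> g) x))"
proof (rule group.inv_equality[OF group_BijGroup])
  let ?g' = "inv\<^bsub>BijGroup Xs\<^esub> g"
  have g': "?g' \<in> Bij Xs" using Bij_inv_mem[OF assms(2)] .
  have li: "?g' \<otimes>\<^bsub>BijGroup Xs\<^esub> g = \<one>\<^bsub>BijGroup Xs\<^esub>"
    by (rule group.l_inv[OF group_BijGroup]) (simp add: BijGroup_carrier assms(2))
  have "wmk n Xs ?g' (\<lambda>x. - i (?g' x)) \<otimes>\<^bsub>BijGroup (wr_points {0..<n} Xs)\<^esub> wmk n Xs g i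
      = wmk n Xs (?g' \<otimes>\<^bsub>BijGroup Xs\<^esub> g) (\<lambda>x. i x + - i (?g' (g x)))"
    by (rule wmk_mult[OF assms(1) g' assms(2)])
  also have "\<dots> = wmk n Xs (\<one>\<^bsub>BijGroup Xs\<^esub>) (\<lambda>x. 0)"
  proof (rule wmk_cong)
    fix x assume x: "x \<in> Xs"
    show "(?g' \<otimes>\<^bsub>BijGroup Xs\<^esub> g) x = \<one>\<^bsub>BijGroup Xs\<^esub> x" unfolding li ..
    show "(i x + - i (?g' (g x))) mod int n = 0 mod int n"
      using Bij_inv_left[OF assms(2) x] by simp
  qed
  also have "\<dots> = \<one>\<^bsub>BijGroup (wr_points {0..<n} Xs)\<^esub>" by (rule wmk_one[OF assms(1), symmetric])
  finally show "wmk n Xs ?g' (\<lambda>x. - i (?g' x)) \<otimes>\<^bsub>BijGroup (wr_points {0..<n} Xs)\<^esub> wmk n Xs g i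
      = \<one>\<^bsub>BijGroup (wr_points {0..<n} Xs)\<^esub>" .
  show "wmk n Xs g i \<in> carrier (BijGroup (wr_points {0..<n} Xs))"
    unfolding BijGroup_carrier by (rule wmk_bij[OF assms])
  show "wmk n Xs ?g' (\<lambda>x. - i (?g' x)) \<in> carrier (BijGroup (wr_points {0..<n} Xs))"
    unfolding BijGroup_carrier by (rule wmk_bij[OF assms(1) g'])
qed

lemma wr_subgroup: assumes "n > 0" "subgroup G (BijGroup Xs)"
  shows "subgroup {wmk n Xs g i | g i. g \<in> G} (BijGroup (wr_points {0..<n} Xs))"
proof -
  have GB: "\<And>g. g \<in> G \<Longrightarrow> g \<in> Bij Xs"
    using subgroup.subset[OF assms(2)] unfolding BijGroup_carrier by blast
  show ?thesis
  proof (rule subgroup.intro)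
    show "{wmk n Xs g i | g i. g \<in> G} \<subseteq> carrier (BijGroup (wr_points {0..<n} Xs))"
    proof
      fix a assume "a \<in> {wmk n Xs g i | g i. g \<in> G}"
      then obtain g i where ab: "a = wmk n Xs g i" "g \<in> G" by blast
      show "a \<in> carrier (BijGroup (wr_points {0..<n} Xs))"
        unfolding BijGroup_carrier ab(1) by (rule wmk_bij[OF assms(1) GB[OF ab(2)]])
    qed
  next
    fix a b assume "a \<in> {wmk n Xs g i | g i. g \<in> G}" "b \<in> {wmk n Xs g i | g i. g \<in> G}"
    then obtain g i h j where ab: "a = wmk n Xs g i" "b = wmk n Xs h j" "g \<in> G" "h \<in> G" by blast
    have e: "a \<otimes>\<^bsub>BijGroup (wr_points {0..<n} Xs)\<^esub> b = wmk n Xs (g \<otimes>\<^bsub>BijGroup Xs\<^esub> h) (\<lambda>x. j x + i (h x))"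
      unfolding ab(1,2) by (rule wmk_mult[OF assms(1) GB[OF ab(3)] GB[OF ab(4)]])
    have "g \<otimes>\<^bsub>BijGroup Xs\<^esub> h \<in> G" by (rule subgroup.m_closed[OF assms(2) ab(3,4)])
    then show "a \<otimes>\<^bsub>BijGroup (wr_points {0..<n} Xs)\<^esub> b \<in> {wmk n Xs g i | g i. g \<in> G}"
      unfolding e by (rule wmk_memI)
  next
    have "\<one>\<^bsub>BijGroup Xs\<^esub> \<in> G" using subgroup.one_closed[OF assms(2)] .
    then show "\<one>\<^bsub>BijGroup (wr_points {0..<n} Xs)\<^esub> \<in> {wmk n Xs g i | g i. g \<in> G}"
      unfolding wmk_one[OF assms(1)] by (rule wmk_memI)
  next
    fix a assume "a \<in> {wmk n Xs g i | g i. g \<in> G}"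
    then obtain g i where ab: "a = wmk n Xs g i" "g \<in> G" by blast
    have "inv\<^bsub>BijGroup Xs\<^esub> g \<in> G" by (rule subgroup.m_inv_closed[OF assms(2) ab(2)])
    then show "inv\<^bsub>BijGroup (wr_points {0..<n} Xs)\<^esub> a \<in> {wmk n Xs g i | g i. g \<in> G}"
      unfolding ab(1) wmk_inv[OF assms(1) GB[OF ab(2)]] by (rule wmk_memI)
  qed
qed




lemma sum_Bij: "g \<in> Bij Xs \<Longrightarrow> (\<Sum>x\<in>Xs. f (g x)) = (\<Sum>x\<in>Xs. (f x :: int))"
  by (rule sum.reindex_bij_betw) (simp add: Bij_def)

lemma comm_formula:
  assumes n: "n > 0" and a: "a \<in> Bij Xs" and b: "b \<in> Bij Xs"
  defines "BW \<equiv> BijGroup (wr_points {0..<n} Xs)" and "BX \<equiv> BijGroup Xs"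
  shows "wmk n Xs a u \<otimes>\<^bsub>BW\<^esub> wmk n Xs b v \<otimes>\<^bsub>BW\<^esub> inv\<^bsub>BW\<^esub> (wmk n Xs a u) \<otimes>\<^bsub>BW\<^esub> inv\<^bsub>BW\<^esub> (wmk n Xs b v)
    = wmk n Xs (a \<otimes>\<^bsub>BX\<^esub> b \<otimes>\<^bsub>BX\<^esub> inv\<^bsub>BX\<^esub> a \<otimes>\<^bsub>BX\<^esub> inv\<^bsub>BX\<^esub> b)
        (\<lambda>x. - v ((inv\<^bsub>BX\<^esub> b) x) + (- u ((inv\<^bsub>BX\<^esub> a) ((inv\<^bsub>BX\<^esub> b) x))
              + (v ((inv\<^bsub>BX\<^esub> a) ((inv\<^bsub>BX\<^esub> b) x)) + u (b ((inv\<^bsub>BX\<^esub> a) ((inv\<^bsub>BX\<^esub> b) x))))))"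
proof -
  let ?a' = "inv\<^bsub>BX\<^esub> a" and ?b' = "inv\<^bsub>BX\<^esub> b"
  have a': "?a' \<in> Bij Xs" unfolding BX_def by (rule Bij_inv_mem[OF a])
  have b': "?b' \<in> Bij Xs" unfolding BX_def by (rule Bij_inv_mem[OF b])
  have ab: "a \<otimes>\<^bsub>BX\<^esub> b \<in> Bij Xs" unfolding BX_def BijGroup_mult[OF a b] by (rule compose_Bij[OF a b])
  have aba: "a \<otimes>\<^bsub>BX\<^esub> b \<otimes>\<^bsub>BX\<^esub> ?a' \<in> Bij Xs"
    unfolding BX_def BijGroup_mult[OF ab[unfolded BX_def] a'[unfolded BX_def]]
    by (rule compose_Bij[OF ab[unfolded BX_def] a'[unfolded BX_def]])
  have ia: "inv\<^bsub>BW\<^esub> (wmk n Xs a u) = wmk n Xs ?a' (\<lambda>x. - u (?a' x))"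
    unfolding BW_def BX_def by (rule wmk_inv[OF n a])
  have ib: "inv\<^bsub>BW\<^esub> (wmk n Xs b v) = wmk n Xs ?b' (\<lambda>x. - v (?b' x))"
    unfolding BW_def BX_def by (rule wmk_inv[OF n b])
  have m1: "wmk n Xs a u \<otimes>\<^bsub>BW\<^esub> wmk n Xs b v = wmk n Xs (a \<otimes>\<^bsub>BX\<^esub> b) (\<lambda>x. v x + u (b x))"
    unfolding BW_def BX_def by (rule wmk_mult[OF n a b])
  have m2: "wmk n Xs (a \<otimes>\<^bsub>BX\<^esub> b) (\<lambda>x. v x + u (b x)) \<otimes>\<^bsub>BW\<^esub> wmk n Xs ?a' (\<lambda>x. - u (?a' x))
     = wmk n Xs (a \<otimes>\<^bsub>BX\<^esub> b \<otimes>\<^bsub>BX\<^esub> ?a') (\<lambda>x. - u (?a' x) + (v (?a' x) + u (b (?a' x))))"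
    unfolding BW_def BX_def by (rule wmk_mult[OF n ab[unfolded BX_def] a'[unfolded BX_def]])
  have m3: "wmk n Xs (a \<otimes>\<^bsub>BX\<^esub> b \<otimes>\<^bsub>BX\<^esub> ?a') (\<lambda>x. - u (?a' x) + (v (?a' x) + u (b (?a' x))))
       \<otimes>\<^bsub>BW\<^esub> wmk n Xs ?b' (\<lambda>x. - v (?b' x))
     = wmk n Xs (a \<otimes>\<^bsub>BX\<^esub> b \<otimes>\<^bsub>BX\<^esub> ?a' \<otimes>\<^bsub>BX\<^esub> ?b')
        (\<lambda>x. - v (?b' x) + (- u (?a' (?b' x)) + (v (?a' (?b' x)) + u (b (?a' (?b' x))))))"
    unfolding BW_def BX_def by (rule wmk_mult[OF n aba[unfolded BX_def] b'[unfolded BX_def]])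
  show ?thesis unfolding ia ib m1 m2 m3 ..
qed

lemma comm_sum:
  fixes u v :: "nat list \<Rightarrow> int"
  assumes a: "a \<in> Bij Xs" and b: "b \<in> Bij Xs"
  defines "BX \<equiv> BijGroup Xs"
  shows "(\<Sum>x\<in>Xs. - v ((inv\<^bsub>BX\<^esub> b) x) + (- u ((inv\<^bsub>BX\<^esub> a) ((inv\<^bsub>BX\<^esub> b) x))
              + (v ((inv\<^bsub>BX\<^esub> a) ((inv\<^bsub>BX\<^esub> b) x)) + u (b ((inv\<^bsub>BX\<^esub> a) ((inv\<^bsub>BX\<^esub> b) x)))))) = 0"
proof -
  let ?a' = "inv\<^bsub>BX\<^esub> a" and ?b' = "inv\<^bsub>BX\<^esub> b"
  have a': "?a' \<in> Bij Xs" unfolding BX_def by (rule Bij_inv_mem[OF a])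
  have b': "?b' \<in> Bij Xs" unfolding BX_def by (rule Bij_inv_mem[OF b])
  have s1: "(\<Sum>x\<in>Xs. v (?b' x)) = (\<Sum>x\<in>Xs. v x)" by (rule sum_Bij[OF b'])
  have s2: "(\<Sum>x\<in>Xs. u (?a' (?b' x))) = (\<Sum>x\<in>Xs. u x)"
    using sum_Bij[OF b', of "\<lambda>y. u (?a' y)"] sum_Bij[OF a', of u] by simp
  have s3: "(\<Sum>x\<in>Xs. v (?a' (?b' x))) = (\<Sum>x\<in>Xs. v x)"
    using sum_Bij[OF b', of "\<lambda>y. v (?a' y)"] sum_Bij[OF a', of v] by simp
  have s4: "(\<Sum>x\<in>Xs. u (b (?a' (?b' x)))) = (\<Sum>x\<in>Xs. u x)"
    using sum_Bij[OF b', of "\<lambda>y. u (b (?a' y))"] sum_Bij[OF a', of "\<lambda>y. u (b y)"] sum_Bij[OF b, of u] by simp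
  have "(\<Sum>x\<in>Xs. - v (?b' x) + (- u (?a' (?b' x)) + (v (?a' (?b' x)) + u (b (?a' (?b' x))))))
    = - (\<Sum>x\<in>Xs. v (?b' x)) + (- (\<Sum>x\<in>Xs. u (?a' (?b' x))) + ((\<Sum>x\<in>Xs. v (?a' (?b' x))) + (\<Sum>x\<in>Xs. u (b (?a' (?b' x))))))"
    by (simp only: sum.distrib sum_negf)
  then show ?thesis by (simp add: s1 s2 s3 s4)
qed




lemma comm_rep:
  assumes n: "n > 0" and G: "subgroup G (BijGroup Xs)"
  and h: "h \<in> derived_set (BijGroup (wr_points {0..<n} Xs)) {wmk n Xs g i | g i. g \<in> G}"
  shows "\<exists>g i. h = wmk n Xs g i \<and> g \<in> derived_set (BijGroup Xs) G \<and> (\<Sum>x\<in>Xs. i x) = 0"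
proof -
  let ?BW = "BijGroup (wr_points {0..<n} Xs)" and ?BX = "BijGroup Xs"
  have GB: "\<And>g. g \<in> G \<Longrightarrow> g \<in> Bij Xs"
    using subgroup.subset[OF G] unfolding BijGroup_carrier by blast
  from h obtain h1 h2 where h12: "h1 \<in> {wmk n Xs g i | g i. g \<in> G}" "h2 \<in> {wmk n Xs g i | g i. g \<in> G}"
    and hh: "h = h1 \<otimes>\<^bsub>?BW\<^esub> h2 \<otimes>\<^bsub>?BW\<^esub> inv\<^bsub>?BW\<^esub> h1 \<otimes>\<^bsub>?BW\<^esub> inv\<^bsub>?BW\<^esub> h2"
    by blast
  from h12 obtain a u b v where ab: "h1 = wmk n Xs a u" "h2 = wmk n Xs b v" "a \<in> G" "b \<in> G" by blast
  let ?F = "\<lambda>x. - v ((inv\<^bsub>?BX\<^esub> b) x) + (- u ((inv\<^bsub>?BX\<^esub> a) ((inv\<^bsub>?BX\<^esub> b) x))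
              + (v ((inv\<^bsub>?BX\<^esub> a) ((inv\<^bsub>?BX\<^esub> b) x)) + u (b ((inv\<^bsub>?BX\<^esub> a) ((inv\<^bsub>?BX\<^esub> b) x)))))"
  have "h = wmk n Xs (a \<otimes>\<^bsub>?BX\<^esub> b \<otimes>\<^bsub>?BX\<^esub> inv\<^bsub>?BX\<^esub> a \<otimes>\<^bsub>?BX\<^esub> inv\<^bsub>?BX\<^esub> b) ?F"
    unfolding hh ab(1,2) by (rule comm_formula[OF n GB[OF ab(3)] GB[OF ab(4)]])
  moreover have "a \<otimes>\<^bsub>?BX\<^esub> b \<otimes>\<^bsub>?BX\<^esub> inv\<^bsub>?BX\<^esub> a \<otimes>\<^bsub>?BX\<^esub> inv\<^bsub>?BX\<^esub> b \<in> derived_set ?BX G"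
    using ab(3,4) by blast
  moreover have "(\<Sum>x\<in>Xs. ?F x) = 0" by (rule comm_sum[OF GB[OF ab(3)] GB[OF ab(4)]])
  ultimately show ?thesis by blast
qed

lemma derived_rep:
  assumes n: "n > 0" and G: "subgroup G (BijGroup Xs)"
  and s: "\<sigma> \<in> derived (BijGroup (wr_points {0..<n} Xs)) {wmk n Xs g i | g i. g \<in> G}"
  shows "\<exists>g i. \<sigma> = wmk n Xs g i \<and> g \<in> derived (BijGroup Xs) G \<and> int n dvd (\<Sum>x\<in>Xs. i x)"
proof -
  let ?BW = "BijGroup (wr_points {0..<n} Xs)" and ?BX = "BijGroup Xs"
  have GB: "\<And>g. g \<in> G \<Longrightarrow> g \<in> Bij Xs"
    using subgroup.subset[OF G] unfolding BijGroup_carrier by blast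
  have dG: "derived ?BX G \<subseteq> G"
    by (rule group.derived_incl[OF group_BijGroup order_refl G])
  from s show ?thesis unfolding derived_def
  proof (induction rule: generate.induct)
    case one
    have "\<one>\<^bsub>?BX\<^esub> \<in> generate ?BX (derived_set ?BX G)" by (rule generate.one)
    moreover have "int n dvd (\<Sum>x\<in>Xs. (0::int))" by simp
    ultimately show ?case unfolding wmk_one[OF n] derived_def by blast
  next
    case (incl h)
    from comm_rep[OF n G incl] obtain g i where
      gi: "h = wmk n Xs g i" "g \<in> derived_set ?BX G" "(\<Sum>x\<in>Xs. i x) = 0" by blast
    have "g \<in> generate ?BX (derived_set ?BX G)" using gi(2) by (rule generate.incl)
    then show ?case using gi unfolding derived_def by fastforce
  next
    case (inv h)
    from comm_rep[OF n G inv] obtain g i where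
      gi: "h = wmk n Xs g i" "g \<in> derived_set ?BX G" "(\<Sum>x\<in>Xs. i x) = 0" by blast
    have g1: "inv\<^bsub>?BX\<^esub> g \<in> generate ?BX (derived_set ?BX G)" using gi(2) by (rule generate.inv)
    have gG: "g \<in> G" using gi(2) dG unfolding derived_def by (meson generate.incl subsetD)
    have e: "inv\<^bsub>?BW\<^esub> h = wmk n Xs (inv\<^bsub>?BX\<^esub> g) (\<lambda>x. - i ((inv\<^bsub>?BX\<^esub> g) x))"
      unfolding gi(1) by (rule wmk_inv[OF n GB[OF gG]])
    have "(\<Sum>x\<in>Xs. - i ((inv\<^bsub>?BX\<^esub> g) x)) = - (\<Sum>x\<in>Xs. i x)"
      using sum_Bij[OF Bij_inv_mem[OF GB[OF gG]], of i] by (simp add: sum_negf)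
    then have "(\<Sum>x\<in>Xs. - i ((inv\<^bsub>?BX\<^esub> g) x)) = 0" using gi(3) by simp
    then show ?case using e g1 unfolding derived_def by fastforce
  next
    case (eng h1 h2)
    from eng.IH(1) obtain g i where gi: "h1 = wmk n Xs g i" "g \<in> derived ?BX G" "int n dvd (\<Sum>x\<in>Xs. i x)"
      unfolding derived_def by blast
    from eng.IH(2) obtain k j where kj: "h2 = wmk n Xs k j" "k \<in> derived ?BX G" "int n dvd (\<Sum>x\<in>Xs. j x)"
      unfolding derived_def by blast
    have gB: "g \<in> Bij Xs" using gi(2) dG GB by blast
    have kB: "k \<in> Bij Xs" using kj(2) dG GB by blast
    have e: "h1 \<otimes>\<^bsub>?BW\<^esub> h2 = wmk n Xs (g \<otimes>\<^bsub>?BX\<^esub> k) (\<lambda>x. j x + i (k x))"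
      unfolding gi(1) kj(1) by (rule wmk_mult[OF n gB kB])
    have m: "g \<otimes>\<^bsub>?BX\<^esub> k \<in> derived ?BX G"
      using gi(2) kj(2) unfolding derived_def by (rule generate.eng)
    have "(\<Sum>x\<in>Xs. j x + i (k x)) = (\<Sum>x\<in>Xs. j x) + (\<Sum>x\<in>Xs. i x)"
      using sum_Bij[OF kB, of i] by (simp add: sum.distrib)
    then have "int n dvd (\<Sum>x\<in>Xs. j x + i (k x))" using gi(3) kj(3) by simp
    then show ?case using e m unfolding derived_def by blast
  qed
qed




definition fullcyc :: "nat list set \<Rightarrow> (nat list \<Rightarrow> nat list) \<Rightarrow> bool" where
"fullcyc Xs b \<longleftrightarrow> (\<exists>e N. N > 0 \<and> bij_betw e {0..<N} Xs \<and> (\<forall>k<N. b (e k) = e (Suc k mod N)))"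

lemma cyc_solve:
  fixes h :: "nat list \<Rightarrow> int"
  assumes e: "bij_betw e {0..<N} Xs" and N: "N > 0" and cyc: "\<forall>k<N. b (e k) = e (Suc k mod N)"
    and dv: "int n dvd (\<Sum>y\<in>Xs. h y)"
  shows "\<exists>u. \<forall>y\<in>Xs. (u (b y) - u y) mod int n = h y mod int n"
proof -
  define idx where "idx = inv_into {0..<N} e"
  define u where "u = (\<lambda>y. \<Sum>j<idx y. h (e j))"
  have T: "(\<Sum>j<N. h (e j)) = (\<Sum>y\<in>Xs. h y)"
    unfolding lessThan_atLeast0 by (rule sum.reindex_bij_betw[OF e])
  have idx0: "idx (e 0) = 0" unfolding idx_def using e N by (simp add: bij_betw_inv_into_left)
  have "\<forall>y\<in>Xs. (u (b y) - u y) mod int n = h y mod int n"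
  proof
    fix y assume y: "y \<in> Xs"
    define k where "k = idx y"
    have kN: "k < N" unfolding k_def idx_def using e y
      by (metis atLeastLessThan_iff bij_betw_def inv_into_into)
    have ek: "e k = y" unfolding k_def idx_def using e y by (simp add: bij_betw_inv_into_right)
    have uy: "u y = (\<Sum>j<k. h (e j))" unfolding u_def k_def ..
    show "(u (b y) - u y) mod int n = h y mod int n"
    proof (cases "Suc k < N")
      case True
      have "b y = e (Suc k)" using cyc kN ek True by (metis mod_less)
      moreover have "idx (e (Suc k)) = Suc k" unfolding idx_def using e True
        by (simp add: bij_betw_inv_into_left)
      ultimately have "u (b y) = (\<Sum>j<Suc k. h (e j))" unfolding u_def by simp
      then have "u (b y) - u y = h y" using uy ek by simp
      then show ?thesis by simp
    next
      case False
      then have Nk: "N = Suc k" using kN by simp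
      have "b y = e 0" using cyc kN ek Nk by (metis mod_self)
      then have ub: "u (b y) = 0" unfolding u_def using idx0 by simp
      have "(\<Sum>j<N. h (e j)) = u y + h y" unfolding Nk uy using ek by simp
      then have "u (b y) - u y = h y - (\<Sum>y\<in>Xs. h y)" using ub T by simp
      then show ?thesis using dv by (simp add: mod_diff_cong dvd_imp_mod_0 mod_diff_right_eq[symmetric])
    qed
  qed
  then show ?thesis by blast
qed




lemma divmod_aux: assumes "(s::nat) < N" shows "(s + N * q) div N = q" "(s + N * q) mod N = s"
  using assms by simp_all

lemma fullcyc_lift:
  assumes n: "n > 0" and e: "bij_betw e {0..<N} Xs" and N: "N > 0"
    and cyc: "\<forall>k<N. b (e k) = e (Suc k mod N)"
  shows "fullcyc (wr_points {0..<n} Xs) (wmk n Xs b (\<lambda>x. if x = e (N - 1) then 1 else 0))"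
proof -
  let ?v = "\<lambda>x. if x = e (N - 1) then 1 else (0::int)"
  let ?W = "wr_points {0..<n} Xs"
  define E where "E = (\<lambda>k. e (k mod N) @ [k div N])"
  define idx where "idx = inv_into {0..<N} e"
  define E' where "E' = (\<lambda>z. idx (butlast z) + N * last z)"
  have eX: "\<And>k. k < N \<Longrightarrow> e k \<in> Xs" using e by (meson atLeastLessThan_iff bij_betwE zero_le)
  have einj: "\<And>k k'. k < N \<Longrightarrow> k' < N \<Longrightarrow> e k = e k' \<Longrightarrow> k = k'"
    using e unfolding bij_betw_def inj_on_def by simp
  have idxl: "\<And>k. k < N \<Longrightarrow> idx (e k) = k" unfolding idx_def using e by (simp add: bij_betw_inv_into_left)
  have idxr: "\<And>x. x \<in> Xs \<Longrightarrow> e (idx x) = x" unfolding idx_def using e by (simp add: bij_betw_inv_into_right)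
  have idxN: "\<And>x. x \<in> Xs \<Longrightarrow> idx x < N" unfolding idx_def using e
    by (metis atLeastLessThan_iff bij_betw_def inv_into_into)
  have bij: "bij_betw E {0..<N * n} ?W"
  proof (rule bij_betw_byWitness[where f'=E'])
    show "\<forall>k\<in>{0..<N * n}. E' (E k) = k"
      unfolding E_def E'_def using N by (simp add: idxl)
    show "\<forall>z\<in>?W. E (E' z) = z"
    proof
      fix z assume "z \<in> ?W"
      then obtain x y where z: "z = x @ [y]" "x \<in> Xs" "y < n" unfolding wr_points_def by auto
      have "(idx x + N * y) mod N = idx x" using idxN[OF z(2)] by simp
      moreover have "(idx x + N * y) div N = y" using idxN[OF z(2)] by simp
      ultimately show "E (E' z) = z" unfolding E_def E'_def z(1) using idxr[OF z(2)] by simp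
    qed
    show "E ` {0..<N * n} \<subseteq> ?W"
    proof
      fix z assume "z \<in> E ` {0..<N * n}"
      then obtain k where k: "k < N * n" "z = E k" by auto
      have "k div N < n" using k(1) by (simp add: less_mult_imp_div_less mult.commute)
      then show "z \<in> ?W" unfolding k(2) E_def using eX N by simp
    qed
    show "E' ` ?W \<subseteq> {0..<N * n}"
    proof
      fix w assume "w \<in> E' ` ?W"
      then obtain z where "z \<in> ?W" "w = E' z" by auto
      then obtain x y where z: "w = E' (x @ [y])" "x \<in> Xs" "y < n" unfolding wr_points_def by auto
      have "idx x + N * y < N + N * y" using idxN[OF z(2)] by simp
      also have "\<dots> = N * Suc y" by simp
      also have "\<dots> \<le> N * n" using z(3) by (metis Suc_leI mult_le_mono2)
      finally show "w \<in> {0..<N * n}" unfolding z(1) E'_def by simp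
    qed
  qed
  have cy: "\<forall>k<N * n. wmk n Xs b ?v (E k) = E (Suc k mod (N * n))"
  proof (intro allI impI)
    fix k assume k: "k < N * n"
    define q r where "q = k div N" and "r = k mod N"
    have kqr: "k = N * q + r" unfolding q_def r_def by simp
    have rN: "r < N" unfolding r_def using N by simp
    have qn: "q < n" unfolding q_def using k by (simp add: less_mult_imp_div_less mult.commute)
    have "wmk n Xs b ?v (E k) = b (e r) @ [nat ((int q + ?v (e r)) mod int n)]"
      unfolding E_def q_def[symmetric] r_def[symmetric] using eX[OF rN] qn by (simp add: wmk_app)
    also have "b (e r) = e (Suc r mod N)" using cyc rN by simp
    finally have L: "wmk n Xs b ?v (E k) = e (Suc r mod N) @ [nat ((int q + ?v (e r)) mod int n)]" .
    show "wmk n Xs b ?v (E k) = E (Suc k mod (N * n))"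
    proof (cases "Suc r < N")
      case True
      have ne: "e r \<noteq> e (N - 1)" using einj[OF rN, of "N - 1"] True N by auto
      have sk: "Suc k = Suc r + N * q" using kqr by simp
      have "Suc k < N * n"
      proof -
        have "Suc k < N * q + N" using sk True by simp
        also have "\<dots> = N * Suc q" by simp
        also have "\<dots> \<le> N * n" using qn by (metis Suc_leI mult_le_mono2)
        finally show ?thesis .
      qed
      moreover have "Suc k mod N = Suc r" "Suc k div N = q" unfolding sk using divmod_aux[OF True] by blast+
      ultimately have "E (Suc k mod (N * n)) = e (Suc r) @ [q]"
        unfolding E_def by simp
      then show ?thesis using L ne True qn by simp
    next
      case False
      then have rr: "r = N - 1" using rN by simp
      have sk: "Suc k = N * Suc q" using kqr rr N by simp
      have L2: "wmk n Xs b ?v (E k) = e 0 @ [nat ((int q + 1) mod int n)]"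
        using L rr N by simp
      show ?thesis
      proof (cases "Suc q < n")
        case True
        have "Suc k < N * n" unfolding sk using True N by (metis mult_less_mono2)
        then have "E (Suc k mod (N * n)) = e 0 @ [Suc q]" unfolding E_def sk using N by simp
        moreover have "nat ((int q + 1) mod int n) = Suc q"
        proof -
          have "(int q + 1) mod int n = int (Suc q mod n)" by (simp add: zmod_int add.commute)
          also have "Suc q mod n = Suc q" by (rule mod_less[OF True])
          finally show ?thesis by simp
        qed
        ultimately show ?thesis using L2 by simp
      next
        case False
        then have qq: "Suc q = n" using qn by simp
        then have "Suc k mod (N * n) = 0" unfolding sk by simp
        then have "E (Suc k mod (N * n)) = e 0 @ [0]" unfolding E_def by simp
        moreover have "nat ((int q + 1) mod int n) = 0"
        proof -
          have "(int q + 1) mod int n = int (Suc q mod n)" by (simp add: zmod_int add.commute)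
          also have "Suc q mod n = 0" using qq by simp
          finally show ?thesis by simp
        qed
        ultimately show ?thesis using L2 by simp
      qed
    qed
  qed
  show ?thesis unfolding fullcyc_def
    using bij cy n N by (intro exI[of _ E] exI[of _ "N * n"]) simp
qed




lemma wr_step:
  assumes n: "n > 0" and G: "subgroup G (BijGroup Xs)"
  and IH: "\<forall>\<sigma>\<in>derived (BijGroup Xs) G. \<exists>a\<in>G. \<exists>b\<in>G.
      \<sigma> = a \<otimes>\<^bsub>BijGroup Xs\<^esub> b \<otimes>\<^bsub>BijGroup Xs\<^esub> inv\<^bsub>BijGroup Xs\<^esub> a \<otimes>\<^bsub>BijGroup Xs\<^esub> inv\<^bsub>BijGroup Xs\<^esub> b
      \<and> fullcyc Xs b"
  shows "\<forall>\<sigma>\<in>derived (BijGroup (wr_points {0..<n} Xs)) {wmk n Xs g i | g i. g \<in> G}.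
     \<exists>A\<in>{wmk n Xs g i | g i. g \<in> G}. \<exists>B\<in>{wmk n Xs g i | g i. g \<in> G}.
      \<sigma> = A \<otimes>\<^bsub>BijGroup (wr_points {0..<n} Xs)\<^esub> B \<otimes>\<^bsub>BijGroup (wr_points {0..<n} Xs)\<^esub>
          inv\<^bsub>BijGroup (wr_points {0..<n} Xs)\<^esub> A \<otimes>\<^bsub>BijGroup (wr_points {0..<n} Xs)\<^esub>
          inv\<^bsub>BijGroup (wr_points {0..<n} Xs)\<^esub> B
      \<and> fullcyc (wr_points {0..<n} Xs) B"
proof
  let ?BW = "BijGroup (wr_points {0..<n} Xs)" and ?BX = "BijGroup Xs"
  let ?W = "{wmk n Xs g i | g i. g \<in> G}"
  have GB: "\<And>g. g \<in> G \<Longrightarrow> g \<in> Bij Xs"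
    using subgroup.subset[OF G] unfolding BijGroup_carrier by blast
  fix \<sigma> assume s: "\<sigma> \<in> derived ?BW ?W"
  obtain g i where gi: "\<sigma> = wmk n Xs g i" "g \<in> derived ?BX G" "int n dvd (\<Sum>x\<in>Xs. i x)"
    using derived_rep[OF n G s] by blast
  obtain a b where ab: "a \<in> G" "b \<in> G"
    "g = a \<otimes>\<^bsub>?BX\<^esub> b \<otimes>\<^bsub>?BX\<^esub> inv\<^bsub>?BX\<^esub> a \<otimes>\<^bsub>?BX\<^esub> inv\<^bsub>?BX\<^esub> b" "fullcyc Xs b"
    using IH gi(2) by blast
  have aB: "a \<in> Bij Xs" and bB: "b \<in> Bij Xs" using GB ab by auto
  obtain e N where eN: "N > 0" "bij_betw e {0..<N} Xs" "\<forall>k<N. b (e k) = e (Suc k mod N)"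
    using ab(4) unfolding fullcyc_def by blast
  define v where "v = (\<lambda>x. if x = e (N - 1) then 1 else (0::int))"
  have fB: "fullcyc (wr_points {0..<n} Xs) (wmk n Xs b v)"
    unfolding v_def by (rule fullcyc_lift[OF n eN(2) eN(1) eN(3)])
  define h where "h = (\<lambda>y. i (b (a y)) + v (a y) - v y)"
  have "(\<Sum>y\<in>Xs. h y) = (\<Sum>y\<in>Xs. i (b (a y))) + (\<Sum>y\<in>Xs. v (a y)) - (\<Sum>y\<in>Xs. v y)"
    unfolding h_def by (simp add: sum.distrib sum_subtractf)
  also have "\<dots> = (\<Sum>y\<in>Xs. i y)"
    using sum_Bij[OF aB, of "\<lambda>y. i (b y)"] sum_Bij[OF bB, of i] sum_Bij[OF aB, of v] by simp
  finally have dvh: "int n dvd (\<Sum>y\<in>Xs. h y)" using gi(3) by simp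
  obtain u where u: "\<And>y. y \<in> Xs \<Longrightarrow> (u (b y) - u y) mod int n = h y mod int n"
    using cyc_solve[OF eN(2) eN(1) eN(3) dvh] by blast
  let ?a' = "inv\<^bsub>?BX\<^esub> a" and ?b' = "inv\<^bsub>?BX\<^esub> b"
  let ?F = "\<lambda>x. - v (?b' x) + (- u (?a' (?b' x)) + (v (?a' (?b' x)) + u (b (?a' (?b' x)))))"
  have cf: "wmk n Xs a u \<otimes>\<^bsub>?BW\<^esub> wmk n Xs b v \<otimes>\<^bsub>?BW\<^esub> inv\<^bsub>?BW\<^esub> (wmk n Xs a u) \<otimes>\<^bsub>?BW\<^esub> inv\<^bsub>?BW\<^esub> (wmk n Xs b v)
     = wmk n Xs g ?F"
    unfolding ab(3) by (rule comm_formula[OF n aB bB])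
  have "wmk n Xs g ?F = wmk n Xs g i"
  proof (rule wmk_cong)
    fix x assume x: "x \<in> Xs"
    define y where "y = ?a' (?b' x)"
    have b'x: "?b' x \<in> Xs" using Bij_mem[OF Bij_inv_mem[OF bB] x] .
    have y: "y \<in> Xs" unfolding y_def using Bij_mem[OF Bij_inv_mem[OF aB] b'x] .
    have ay: "a y = ?b' x" unfolding y_def by (rule Bij_inv_right[OF aB b'x])
    have bay: "b (a y) = x" unfolding ay by (rule Bij_inv_right[OF bB x])
    have F: "?F x = (u (b y) - u y) + (v y - v (a y))"
    proof -
      have "?F x = - v (?b' x) + (- u y + (v y + u (b y)))" unfolding y_def by simp
      also have "\<dots> = - v (a y) + (- u y + (v y + u (b y)))" by (simp only: ay)
      finally show ?thesis by simp
    qed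
    have I: "i x = h y + (v y - v (a y))" unfolding h_def bay by simp
    show "?F x mod int n = i x mod int n" unfolding F I by (rule mod_add_cong[OF u[OF y] refl])
  qed simp
  then have "\<sigma> = wmk n Xs a u \<otimes>\<^bsub>?BW\<^esub> wmk n Xs b v \<otimes>\<^bsub>?BW\<^esub> inv\<^bsub>?BW\<^esub> (wmk n Xs a u) \<otimes>\<^bsub>?BW\<^esub> inv\<^bsub>?BW\<^esub> (wmk n Xs b v)"
    using cf gi(1) by simp
  moreover have "wmk n Xs a u \<in> ?W" by (rule wmk_memI[OF ab(1)])
  moreover have "wmk n Xs b v \<in> ?W" by (rule wmk_memI[OF ab(2)])
  ultimately show "\<exists>A\<in>?W. \<exists>B\<in>?W. \<sigma> = A \<otimes>\<^bsub>?BW\<^esub> B \<otimes>\<^bsub>?BW\<^esub> inv\<^bsub>?BW\<^esub> A \<otimes>\<^bsub>?BW\<^esub> inv\<^bsub>?BW\<^esub> B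
      \<and> fullcyc (wr_points {0..<n} Xs) B" using fB by blast
qed




definition good :: "(nat list \<Rightarrow> nat list) set \<Rightarrow> nat list set \<Rightarrow> bool" where
"good G Xs \<longleftrightarrow> finite Xs \<and> Xs \<noteq> {} \<and> subgroup G (BijGroup Xs) \<and>
   (\<forall>\<sigma>\<in>derived (BijGroup Xs) G. \<exists>a\<in>G. \<exists>b\<in>G.
      \<sigma> = a \<otimes>\<^bsub>BijGroup Xs\<^esub> b \<otimes>\<^bsub>BijGroup Xs\<^esub> inv\<^bsub>BijGroup Xs\<^esub> a \<otimes>\<^bsub>BijGroup Xs\<^esub> inv\<^bsub>BijGroup Xs\<^esub> b
      \<and> fullcyc Xs b)"

lemma wr_points_image: "wr_points Y Xs = (\<lambda>(x, y). x @ [y]) ` (Xs \<times> Y)"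
  unfolding wr_points_def by auto

lemma good_base: "good {\<lambda>z\<in>{[]}. z} {[]}"
proof -
  let ?B = "BijGroup {[]::nat list}"
  have one: "\<one>\<^bsub>?B\<^esub> = (\<lambda>z\<in>{[]}. z)" by (rule BijGroup_one)
  have sg: "subgroup {\<one>\<^bsub>?B\<^esub>} ?B" by (rule group.triv_subgroup[OF group_BijGroup])
  have dd: "derived ?B {\<one>\<^bsub>?B\<^esub>} \<subseteq> {\<one>\<^bsub>?B\<^esub>}"
    by (rule group.derived_incl[OF group_BijGroup order_refl sg])
  have oc: "\<one>\<^bsub>?B\<^esub> \<in> carrier ?B" by (rule monoid.one_closed[OF group.is_monoid[OF group_BijGroup]])
  have c: "\<one>\<^bsub>?B\<^esub> = \<one>\<^bsub>?B\<^esub> \<otimes>\<^bsub>?B\<^esub> \<one>\<^bsub>?B\<^esub> \<otimes>\<^bsub>?B\<^esub> inv\<^bsub>?B\<^esub> \<one>\<^bsub>?B\<^esub> \<otimes>\<^bsub>?B\<^esub> inv\<^bsub>?B\<^esub> \<one>\<^bsub>?B\<^esub>"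
    using oc by (simp add: monoid.inv_one[OF group.is_monoid[OF group_BijGroup]] monoid.l_one[OF group.is_monoid[OF group_BijGroup]])
  have fc: "fullcyc {[]} \<one>\<^bsub>?B\<^esub>"
    unfolding fullcyc_def one
    by (rule exI[of _ "\<lambda>_. []"], rule exI[of _ 1]) (simp add: bij_betw_def)
  show ?thesis unfolding good_def one[symmetric]
    using sg dd c fc by auto
qed

lemma good_step: assumes "good G Xs" "n > 0"
  shows "good {wmk n Xs g i | g i. g \<in> G} (wr_points {0..<n} Xs)"
proof -
  have g: "finite Xs" "Xs \<noteq> {}" "subgroup G (BijGroup Xs)"
    "\<forall>\<sigma>\<in>derived (BijGroup Xs) G. \<exists>a\<in>G. \<exists>b\<in>G.
      \<sigma> = a \<otimes>\<^bsub>BijGroup Xs\<^esub> b \<otimes>\<^bsub>BijGroup Xs\<^esub> inv\<^bsub>BijGroup Xs\<^esub> a \<otimes>\<^bsub>BijGroup Xs\<^esub> inv\<^bsub>BijGroup Xs\<^esub> b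
      \<and> fullcyc Xs b" using assms(1) unfolding good_def by blast+
  have "finite (wr_points {0..<n} Xs)" unfolding wr_points_image using g(1) by simp
  moreover have "wr_points {0..<n} Xs \<noteq> {}"
  proof -
    obtain x where "x \<in> Xs" using g(2) by blast
    then have "x @ [0] \<in> wr_points {0..<n} Xs" using assms(2) by simp
    then show ?thesis by blast
  qed
  moreover have "subgroup {wmk n Xs g i | g i. g \<in> G} (BijGroup (wr_points {0..<n} Xs))"
    by (rule wr_subgroup[OF assms(2) g(3)])
  moreover note wr_step[OF assms(2) g(3) g(4)]
  ultimately show ?thesis unfolding good_def by blast
qed

lemma good_wr_aux: "\<forall>q\<in>set qs. q > 0 \<Longrightarrow> good (fst (wr_aux qs)) (snd (wr_aux qs))"
proof (induction qs)
  case Nil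
  then show ?case using good_base by simp
next
  case (Cons p qs)
  obtain G Xs where GX: "wr_aux qs = (G, Xs)" by (cases "wr_aux qs")
  have gG: "good G Xs" using Cons GX by simp
  have p: "p > 0" using Cons.prems by simp
  have "wr_aux (p # qs) = (wr_perm (cyc_perms p) {0..<p} G Xs, wr_points {0..<p} Xs)" using GX by simp
  also have "wr_perm (cyc_perms p) {0..<p} G Xs = {wmk p Xs g i | g i. g \<in> G}"
    using p by (simp add: wr_perm_eq)
  finally show ?case using good_step[OF gG p] by simp
qed




lemma comm_length_le1:
  assumes sg: "subgroup G (BijGroup Y)"
    and s: "\<sigma> = a \<otimes>\<^bsub>BijGroup Y\<^esub> b \<otimes>\<^bsub>BijGroup Y\<^esub> inv\<^bsub>BijGroup Y\<^esub> a \<otimes>\<^bsub>BijGroup Y\<^esub> inv\<^bsub>BijGroup Y\<^esub> b"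
    and ab: "a \<in> G" "b \<in> G"
  shows "comm_length (BijGroup Y\<lparr>carrier := G\<rparr>) \<sigma> \<le> 1"
    and "\<sigma> \<noteq> \<one>\<^bsub>BijGroup Y\<^esub> \<Longrightarrow> comm_length (BijGroup Y\<lparr>carrier := G\<rparr>) \<sigma> = 1"
proof -
  let ?B = "BijGroup Y" and ?Gr = "BijGroup Y\<lparr>carrier := G\<rparr>"
  have grp: "group ?B" by (rule group_BijGroup)
  have dsc: "derived_set ?Gr G = derived_set ?B G"
    by (rule group.derived_set_consistent[OF grp order_refl sg])
  have sd: "\<sigma> \<in> derived_set ?B G" using s ab by blast
  have sc: "\<sigma> \<in> carrier ?B" using group.derived_set_in_carrier[OF grp subgroup.subset[OF sg]] sd by blast
  have fo: "\<sigma> = foldr (\<otimes>\<^bsub>?Gr\<^esub>) [\<sigma>] \<one>\<^bsub>?Gr\<^esub>"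
    using monoid.r_one[OF group.is_monoid[OF grp] sc] by simp
  have P1: "\<exists>cs. length cs = 1 \<and> set cs \<subseteq> derived_set ?Gr (carrier ?Gr) \<and> \<sigma> = foldr (\<otimes>\<^bsub>?Gr\<^esub>) cs \<one>\<^bsub>?Gr\<^esub>"
    using fo sd dsc by (intro exI[of _ "[\<sigma>]"]) simp
  show le: "comm_length ?Gr \<sigma> \<le> 1" unfolding comm_length_def by (rule Least_le) (use P1 in blast)
  assume ne: "\<sigma> \<noteq> \<one>\<^bsub>?B\<^esub>"
  have "comm_length ?Gr \<sigma> \<noteq> 0"
  proof
    assume z: "comm_length ?Gr \<sigma> = 0"
    have "\<exists>cs. length cs = comm_length ?Gr \<sigma> \<and> set cs \<subseteq> derived_set ?Gr (carrier ?Gr)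
        \<and> \<sigma> = foldr (\<otimes>\<^bsub>?Gr\<^esub>) cs \<one>\<^bsub>?Gr\<^esub>"
      unfolding comm_length_def by (rule LeastI_ex) (use P1 in blast)
    then have "\<sigma> = \<one>\<^bsub>?Gr\<^esub>" unfolding z by auto
    then show False using ne by simp
  qed
  then show "comm_length ?Gr \<sigma> = 1" using le by simp
qed




lemma nontriv:
  assumes n: "n \<ge> 2" and gd: "good G' X'" and xx: "x1 \<in> X'" "x2 \<in> X'" "x1 \<noteq> x2"
  shows "\<exists>\<tau>\<in>derived (BijGroup (wr_points {0..<n} X')) {wmk n X' g i | g i. g \<in> G'}.
           \<tau> \<noteq> \<one>\<^bsub>BijGroup (wr_points {0..<n} X')\<^esub>"
proof -
  let ?B' = "BijGroup X'" and ?B = "BijGroup (wr_points {0..<n} X')"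
  let ?W = "{wmk n X' g i | g i. g \<in> G'}"
  have n0: "n > 0" using n by simp
  have sg: "subgroup G' ?B'" using gd unfolding good_def by blast
  have GB: "\<And>g. g \<in> G' \<Longrightarrow> g \<in> Bij X'"
    using subgroup.subset[OF sg] unfolding BijGroup_carrier by blast
  have IH: "\<forall>\<sigma>\<in>derived ?B' G'. \<exists>a\<in>G'. \<exists>b\<in>G'.
      \<sigma> = a \<otimes>\<^bsub>?B'\<^esub> b \<otimes>\<^bsub>?B'\<^esub> inv\<^bsub>?B'\<^esub> a \<otimes>\<^bsub>?B'\<^esub> inv\<^bsub>?B'\<^esub> b \<and> fullcyc X' b"
    using gd unfolding good_def by blast
  have "\<one>\<^bsub>?B'\<^esub> \<in> derived ?B' G'" unfolding derived_def by (rule generate.one)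
  then obtain b where b: "b \<in> G'" "fullcyc X' b" using IH by blast
  have bB: "b \<in> Bij X'" using GB b(1) .
  obtain e N where eN: "N > 0" "bij_betw e {0..<N} X'" "\<forall>k<N. b (e k) = e (Suc k mod N)"
    using b(2) unfolding fullcyc_def by blast
  have N2: "N \<ge> 2"
  proof (rule ccontr)
    assume "\<not> N \<ge> 2"
    then have "N = 1" using eN(1) by simp
    then have "X' = {e 0}" using bij_betw_imp_surj_on[OF eN(2)] by auto
    then show False using xx by simp
  qed
  define x0 where "x0 = e 0"
  have x0X: "x0 \<in> X'" unfolding x0_def using eN(1,2) by (meson atLeastLessThan_iff bij_betwE zero_le)
  have bx0: "b x0 \<noteq> x0"
  proof -
    have "b x0 = e 1" unfolding x0_def using eN(3) N2 by simp
    moreover have "e 1 \<noteq> e 0"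
    proof
      assume h: "e 1 = e 0"
      have inj: "inj_on e {0..<N}" using eN(2) unfolding bij_betw_def by blast
      have "(1::nat) = 0" by (rule inj_onD[OF inj h]) (use N2 in auto)
      then show False by simp
    qed
    ultimately show ?thesis unfolding x0_def by simp
  qed
  define \<delta> where "\<delta> = (\<lambda>x. if x = x0 then 1 else (0::int))"
  define z where "z = (\<lambda>x::nat list. (0::int))"
  let ?o = "\<one>\<^bsub>?B'\<^esub>"
  have oG: "?o \<in> G'" by (rule subgroup.one_closed[OF sg])
  have oB: "?o \<in> Bij X'" using GB oG .
  let ?A = "wmk n X' ?o \<delta>" and ?Bm = "wmk n X' b z"
  define \<tau> where "\<tau> = ?A \<otimes>\<^bsub>?B\<^esub> ?Bm \<otimes>\<^bsub>?B\<^esub> inv\<^bsub>?B\<^esub> ?A \<otimes>\<^bsub>?B\<^esub> inv\<^bsub>?B\<^esub> ?Bm"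
  have AW: "?A \<in> ?W" by (rule wmk_memI[OF oG])
  have BW: "?Bm \<in> ?W" by (rule wmk_memI[OF b(1)])
  have "\<tau> \<in> derived_set ?B ?W" unfolding \<tau>_def using AW BW by blast
  then have td: "\<tau> \<in> derived ?B ?W" unfolding derived_def by (rule generate.incl)
  let ?a' = "inv\<^bsub>?B'\<^esub> ?o" and ?b' = "inv\<^bsub>?B'\<^esub> b"
  let ?F = "\<lambda>x. - z (?b' x) + (- \<delta> (?a' (?b' x)) + (z (?a' (?b' x)) + \<delta> (b (?a' (?b' x)))))"
  have tf: "\<tau> = wmk n X' (?o \<otimes>\<^bsub>?B'\<^esub> b \<otimes>\<^bsub>?B'\<^esub> ?a' \<otimes>\<^bsub>?B'\<^esub> ?b') ?F"
    unfolding \<tau>_def by (rule comm_formula[OF n0 oB bB])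
  have b'x0: "?b' x0 \<in> X'" using Bij_mem[OF Bij_inv_mem[OF bB] x0X] .
  have a'o: "?a' = ?o" by (rule monoid.inv_one[OF group.is_monoid[OF group_BijGroup]])
  have a'b': "?a' (?b' x0) = ?b' x0"
  proof -
    have "?a' (?b' x0) = ?o (?b' x0)" by (simp only: a'o)
    also have "\<dots> = ?b' x0" using b'x0 by (simp add: BijGroup_one)
    finally show ?thesis .
  qed
  have bb': "b (?b' x0) = x0" by (rule Bij_inv_right[OF bB x0X])
  have b'ne: "?b' x0 \<noteq> x0" using bb' bx0 by auto
  have F1: "?F x0 = 1" unfolding a'b' bb' using b'ne by (simp add: \<delta>_def z_def)
  have "\<tau> (x0 @ [0]) = (?o \<otimes>\<^bsub>?B'\<^esub> b \<otimes>\<^bsub>?B'\<^esub> ?a' \<otimes>\<^bsub>?B'\<^esub> ?b') x0 @ [nat ((int 0 + ?F x0) mod int n)]"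
    unfolding tf by (rule wmk_app[OF x0X n0])
  also have "nat ((int 0 + ?F x0) mod int n) = 1" unfolding F1 using n by simp
  finally have t1: "last (\<tau> (x0 @ [0])) = 1" by simp
  have "\<one>\<^bsub>?B\<^esub> (x0 @ [0]) = x0 @ [0]" unfolding BijGroup_one using x0X n0 by simp
  then have "last (\<one>\<^bsub>?B\<^esub> (x0 @ [0])) = 0" by simp
  then have "\<tau> \<noteq> \<one>\<^bsub>?B\<^esub>" using t1 by auto
  then show ?thesis using td by blast
qed

theorem mainTheorem6:
  fixes ps :: "nat list"
  assumes "length ps \<ge> 2"
    and "\<forall>p \<in> set ps. p \<ge> 2"
  shows "commutator_width (iter_wreath ps) = 1"
proof -
  obtain n m qs' where rps: "rev ps = n # m # qs'"
    using assms(1) by (metis One_nat_def Suc_1 length_Cons length_rev list.size(3) not_less_eq_eq remdups_adj.cases zero_le)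
  have all: "\<forall>q\<in>set (rev ps). q \<ge> 2" using assms(2) by simp
  then have n2: "n \<ge> 2" and m2: "m \<ge> 2" and qpos: "\<forall>q\<in>set qs'. q > 0" unfolding rps by auto
  obtain G'' X'' where GX'': "wr_aux qs' = (G'', X'')" by (cases "wr_aux qs'")
  have g'': "good G'' X''" using good_wr_aux[OF qpos] GX'' by simp
  obtain x'' where x'': "x'' \<in> X''" using g'' unfolding good_def by blast
  obtain G' X' where GX': "wr_aux (m # qs') = (G', X')" by (cases "wr_aux (m # qs')")
  have g': "good G' X'" using good_wr_aux[of "m # qs'"] qpos m2 GX' by simp
  have X'eq: "X' = wr_points {0..<m} X''" using GX' GX'' by simp
  have x1: "x'' @ [0] \<in> X'" and x2: "x'' @ [1] \<in> X'" unfolding X'eq using x'' m2 by auto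
  let ?G = "{wmk n X' g i | g i. g \<in> G'}" and ?X = "wr_points {0..<n} X'"
  have wa: "wr_aux (rev ps) = (?G, ?X)"
    unfolding rps using GX' n2 by (simp add: wr_perm_eq)
  have g: "good ?G ?X" by (rule good_step[OF g']) (use n2 in simp)
  have iw: "iter_wreath ps = BijGroup ?X\<lparr>carrier := ?G\<rparr>" unfolding iter_wreath_def wa by simp
  let ?B = "BijGroup ?X" and ?Gr = "BijGroup ?X\<lparr>carrier := ?G\<rparr>"
  have sg: "subgroup ?G ?B" using g unfolding good_def by blast
  have IH: "\<forall>\<sigma>\<in>derived ?B ?G. \<exists>a\<in>?G. \<exists>b\<in>?G.
      \<sigma> = a \<otimes>\<^bsub>?B\<^esub> b \<otimes>\<^bsub>?B\<^esub> inv\<^bsub>?B\<^esub> a \<otimes>\<^bsub>?B\<^esub> inv\<^bsub>?B\<^esub> b \<and> fullcyc ?X b"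
    using g unfolding good_def by blast
  have dc: "derived ?Gr (carrier ?Gr) = derived ?B ?G"
    using group.derived_consistent[OF group_BijGroup order_refl sg] by simp
  have le: "\<And>\<sigma>. \<sigma> \<in> derived ?B ?G \<Longrightarrow> comm_length ?Gr \<sigma> \<le> 1"
  proof -
    fix \<sigma> assume "\<sigma> \<in> derived ?B ?G"
    then obtain a b where "a \<in> ?G" "b \<in> ?G"
      "\<sigma> = a \<otimes>\<^bsub>?B\<^esub> b \<otimes>\<^bsub>?B\<^esub> inv\<^bsub>?B\<^esub> a \<otimes>\<^bsub>?B\<^esub> inv\<^bsub>?B\<^esub> b" using IH by blast
    then show "comm_length ?Gr \<sigma> \<le> 1" using comm_length_le1(1)[OF sg] by blast
  qed
  obtain \<tau> where t: "\<tau> \<in> derived ?B ?G" "\<tau> \<noteq> \<one>\<^bsub>?B\<^esub>"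
    using nontriv[OF n2 g' x1 x2] by auto
  have t1: "comm_length ?Gr \<tau> = 1"
  proof -
    obtain a b where "a \<in> ?G" "b \<in> ?G"
      "\<tau> = a \<otimes>\<^bsub>?B\<^esub> b \<otimes>\<^bsub>?B\<^esub> inv\<^bsub>?B\<^esub> a \<otimes>\<^bsub>?B\<^esub> inv\<^bsub>?B\<^esub> b" using IH t(1) by blast
    then show ?thesis using comm_length_le1(2)[OF sg] t(2) by blast
  qed
  have "commutator_width ?Gr = (SUP g\<in>derived ?B ?G. enat (comm_length ?Gr g))"
    unfolding commutator_width_def dc ..
  also have "\<dots> = 1"
  proof (rule antisym)
    show "(SUP g\<in>derived ?B ?G. enat (comm_length ?Gr g)) \<le> 1"
    proof (rule SUP_least)
      fix g assume "g \<in> derived ?B ?G"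
      then have "comm_length ?Gr g \<le> 1" by (rule le)
      then show "enat (comm_length ?Gr g) \<le> 1" by (simp add: one_enat_def)
    qed
    have "enat (comm_length ?Gr \<tau>) \<le> (SUP g\<in>derived ?B ?G. enat (comm_length ?Gr g))"
      by (rule SUP_upper[OF t(1)])
    then show "1 \<le> (SUP g\<in>derived ?B ?G. enat (comm_length ?Gr g))" using t1 by (simp add: one_enat_def)
  qed
  finally show ?thesis unfolding iw .
qed


end
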